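(* Let $S_1,\ldots,S_m$ be propositional formulae. The lexicographic orders $[S_1,\ldots,S_{m-1},S_m]$ and $[S_1,\ldots,S_{m-1}]$ are equivalent if and only if either $Q \models S_m$ or $Q \models \neg S_m$ holds for every formula $Q = (B_1 \equiv S_1) \wedge \cdots \wedge (B_{m-1} \equiv S_{m-1})$, where each $B_i$ is either $\top$ or $\bot$.
   Context: Models are truth assignments. For a formula $F$: $I \leq_F J$ iff $I \models F$ or $J \not\models F$. For a sequence $S=[S_1,\ldots,S_m]$: $I \leq_S J$ iff either $S=[]$, or ($I \leq_{S_1} J$ and (either $J \not\leq_{S_1} I$ or $I \leq_R J$)), where $R=[S_2,\ldots,S_m]$. Two sequences $S$ and $R$ are equivalent if $I \leq_S J$ and $I\leq_R J$ coincide for all pairs of models $I,J$. *)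

theory Defs
  imports Main
begin

datatype 'v form = Top | Bot | Var 'v | Neg "'v form" | And "'v form" "'v form"
  | Or "'v form" "'v form" | Imp "'v form" "'v form" | Iff "'v form" "'v form"

type_synonym 'v model = "'v \<Rightarrow> bool"

fun sat :: "'v model \<Rightarrow> 'v form \<Rightarrow> bool" (infix "\<Turnstile>" 50) where
  "sat I Top = True"
| "sat I Bot = False"
| "sat I (Var x) = I x"
| "sat I (Neg F) = (\<not> sat I F)"
| "sat I (And F G) = (sat I F \<and> sat I G)"
| "sat I (Or F G) = (sat I F \<or> sat I G)"
| "sat I (Imp F G) = (sat I F \<longrightarrow> sat I G)"
| "sat I (Iff F G) = (sat I F \<longleftrightarrow> sat I G)"

definition entails :: "'v form \<Rightarrow> 'v form \<Rightarrow> bool" where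
  "entails Q F \<longleftrightarrow> (\<forall>I. sat I Q \<longrightarrow> sat I F)"

definition le_form :: "'v form \<Rightarrow> 'v model \<Rightarrow> 'v model \<Rightarrow> bool" where
  "le_form F I J \<longleftrightarrow> (sat I F \<or> \<not> sat J F)"

fun le_seq :: "'v form list \<Rightarrow> 'v model \<Rightarrow> 'v model \<Rightarrow> bool" where
  "le_seq [] I J = True"
| "le_seq (S1 # R) I J = (le_form S1 I J \<and> (\<not> le_form S1 J I \<or> le_seq R I J))"

definition seq_equiv :: "'v form list \<Rightarrow> 'v form list \<Rightarrow> bool" where
  "seq_equiv S R \<longleftrightarrow> (\<forall>I J. le_seq S I J = le_seq R I J)"

fun bconj :: "bool list \<Rightarrow> 'v form list \<Rightarrow> 'v form" where
  "bconj (b # bs) (S # Ss) = And (Iff (if b then Top else Bot) S) (bconj bs Ss)"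
| "bconj _ _ = Top"

end

theory Submission
  imports Defs
begin

lemma le_seq_app:
  "le_seq (S @ [Sm]) I J = (le_seq S I J \<and> ((\<forall>s\<in>set S. sat I s = sat J s) \<longrightarrow> le_form Sm I J))"
  by (induction S) (auto simp: le_form_def)

lemma sat_bconj:
  "length B = length S \<Longrightarrow> sat I (bconj B S) = (\<forall>i<length S. sat I (S!i) = B!i)"
proof (induction B arbitrary: S)
  case Nil then show ?case by simp
next
  case (Cons b B S)
  then obtain s S' where S: "S = s # S'" by (cases S) auto
  with Cons show ?case by (auto simp: nth_Cons split: nat.splits)
qed

theorem theorem2:
  fixes S :: "'v form list" and Sm :: "'v form"
  shows "seq_equiv (S @ [Sm]) S \<longleftrightarrow>
    (\<forall>B :: bool list. length B = length S \<longrightarrow>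
       entails (bconj B S) Sm \<or> entails (bconj B S) (Neg Sm))"
proof
  assume H: "seq_equiv (S @ [Sm]) S"
  have key: "\<And>I J. \<forall>s\<in>set S. sat I s = sat J s \<Longrightarrow> sat J Sm \<Longrightarrow> sat I Sm"
  proof -
    fix I J assume a: "\<forall>s\<in>set S. sat I s = sat J s" and b: "sat J Sm"
    have "le_seq S I J"
      using a by (induction S) (auto simp: le_form_def)
    with H a have "le_form Sm I J" unfolding seq_equiv_def le_seq_app by metis
    with b show "sat I Sm" by (simp add: le_form_def)
  qed
  show "\<forall>B :: bool list. length B = length S \<longrightarrow>
       entails (bconj B S) Sm \<or> entails (bconj B S) (Neg Sm)"
  proof (intro allI impI)
    fix B :: "bool list" assume L: "length B = length S"
    show "entails (bconj B S) Sm \<or> entails (bconj B S) (Neg Sm)"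
    proof (rule ccontr)
      assume "\<not> ?thesis"
      then obtain I J where I: "sat I (bconj B S)" "\<not> sat I Sm"
        and J: "sat J (bconj B S)" "sat J Sm" by (auto simp: entails_def)
      have "\<forall>s\<in>set S. sat I s = sat J s"
        using I(1) J(1) L by (auto simp: sat_bconj in_set_conv_nth)
      with key I J show False by blast
    qed
  qed
next
  assume H: "\<forall>B :: bool list. length B = length S \<longrightarrow>
       entails (bconj B S) Sm \<or> entails (bconj B S) (Neg Sm)"
  have key: "le_form Sm I J" if a: "\<forall>s\<in>set S. sat I s = sat J s" for I J
  proof -
    define B where "B = map (sat J) S"
    have L: "length B = length S" by (simp add: B_def)
    have "sat J (bconj B S)" using L by (simp add: sat_bconj B_def)
    moreover have "sat I (bconj B S)" using L a by (simp add: sat_bconj B_def)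
    ultimately show ?thesis using H L by (auto simp: entails_def le_form_def)
  qed
  show "seq_equiv (S @ [Sm]) S"
    unfolding seq_equiv_def le_seq_app using key by blast
qed

end
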